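(* Let $\alpha,\beta$ be nonzero real numbers and $r,x$ real numbers. For every nonnegative integer $m$, the following identity of formal power series in $t$ holds: $$\sum_{n=0}^{\infty}S_{n+m}(x;\alpha,\beta,r)\frac{t^{n}}{n!}=(1+\alpha t)^{\frac{r-m\alpha}{\alpha}}\exp\left(\frac{x}{\beta}\left[(1+\alpha t)^{\frac{\beta}{\alpha}}-1\right]\right)S_{m}\left(x(1+\alpha t)^{\frac{\beta}{\alpha}};\alpha,\beta,r\right).$$
   Context: For a number $t$ and $\alpha$, the generalised factorial is $(t|\alpha)_n=\prod_{j=0}^{n-1}(t-j\alpha)$ for $n\ge 1$ and $(t|\alpha)_0=1$. For parameters $\alpha,\beta,\gamma$, the generalised Stirling numbers $S(n,k,\alpha,\beta,\gamma)$ ($0\le k\le n$) are defined by the polynomial identity $(t|\alpha)_n=\sum_{k=0}^{n}S(n,k,\alpha,\beta,\gamma)\,(t-\gamma|\beta)_k$ in the variable $t$. The generalised exponential polynomials are $S_n(y;\alpha,\beta,r)=\sum_{k=0}^{n}S(n,k,\alpha,\beta,r)\,y^k$. Here $(1+\alpha t)^{c}$ denotes the formal power series $\sum_{j\ge0}\binom{c}{j}\alpha^j t^j$, and $S_m(x(1+\alpha t)^{\beta/\alpha};\alpha,\beta,r)$ means the polynomial $S_m(\cdot;\alpha,\beta,r)$ evaluated at the power series $x(1+\alpha t)^{\beta/\alpha}$. *)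

theory Defs
  imports "HOL-Analysis.Analysis" "HOL-Computational_Algebra.Formal_Power_Series"
begin

definition gfact :: "real \<Rightarrow> real \<Rightarrow> nat \<Rightarrow> real" where
  "gfact t a n = (\<Prod>j<n. t - real j * a)"

definition gstirling :: "nat \<Rightarrow> nat \<Rightarrow> real \<Rightarrow> real \<Rightarrow> real \<Rightarrow> real" where
  "gstirling n k a b g =
     (THE c :: nat \<Rightarrow> real. (\<forall>t. gfact t a n = (\<Sum>i\<le>n. c i * gfact (t - g) b i))
                           \<and> (\<forall>i>n. c i = 0)) k"

definition gexppoly_fps :: "nat \<Rightarrow> real fps \<Rightarrow> real \<Rightarrow> real \<Rightarrow> real \<Rightarrow> real fps" where
  "gexppoly_fps n y a b r = (\<Sum>k\<le>n. fps_const (gstirling n k a b r) * y ^ k)"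

definition gexppoly :: "nat \<Rightarrow> real \<Rightarrow> real \<Rightarrow> real \<Rightarrow> real \<Rightarrow> real" where
  "gexppoly n y a b r = (\<Sum>k\<le>n. gstirling n k a b r * y ^ k)"

text \<open>(1 + a t)^c as the formal power series sum_j (c choose j) a^j t^j.\<close>
definition binom_fps :: "real \<Rightarrow> real \<Rightarrow> real fps" where
  "binom_fps a c = Abs_fps (\<lambda>j. (c gchoose j) * a ^ j)"

text \<open>exp of a formal power series with zero constant term, by composition.\<close>
definition exp_fps :: "real fps \<Rightarrow> real fps" where
  "exp_fps u = fps_exp 1 oo u"

end

theory Submission
  imports Defs
begin
no_notation vec_nth (infixl "$" 90)
notation fps_nth (infixl "$" 75)

lemma B_mult: "binom_fps a c * binom_fps a d = binom_fps a (c + d)"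
proof (rule fps_ext)
  fix n
  have "(binom_fps a c * binom_fps a d) $ n = (\<Sum>i=0..n. ((c gchoose i) * (d gchoose (n - i))) * a ^ n)"
    unfolding fps_mult_nth binom_fps_def
    by (rule sum.cong) (auto simp: power_add[symmetric])
  also have "\<dots> = ((c + d) gchoose n) * a ^ n"
    by (simp add: sum_distrib_right[symmetric] gbinomial_Vandermonde)
  finally show "(binom_fps a c * binom_fps a d) $ n = binom_fps a (c + d) $ n"
    by (simp add: binom_fps_def)
qed

lemma B_deriv: "fps_deriv (binom_fps a c) = fps_const (c * a) * binom_fps a (c - 1)"
proof (rule fps_ext)
  fix n
  have "of_nat (Suc n) * (c gchoose Suc n) = c * ((c - 1) gchoose n)"
    by (rule gbinomial_absorption)
  then show "fps_deriv (binom_fps a c) $ n = (fps_const (c * a) * binom_fps a (c - 1)) $ n"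
    by (simp add: binom_fps_def)
qed

lemma B_0[simp]: "binom_fps a c $ 0 = 1"
  by (simp add: binom_fps_def)

lemma gfact_Suc: "gfact t a (Suc n) = gfact t a n * (t - real n * a)"
  by (simp add: gfact_def)

fun st :: "real \<Rightarrow> real \<Rightarrow> real \<Rightarrow> nat \<Rightarrow> nat \<Rightarrow> real" where
  "st a b g 0 k = (if k = 0 then 1 else 0)"
| "st a b g (Suc n) k = (if k = 0 then 0 else st a b g n (k - 1)) + (real k * b - real n * a + g) * st a b g n k"

lemma st_zero: "k > n \<Longrightarrow> st a b g n k = 0"
  by (induction n arbitrary: k) auto

lemma st_ident: "gfact t a n = (\<Sum>i\<le>n. st a b g n i * gfact (t - g) b i)"
proof (induction n)
  case 0
  then show ?case by (simp add: gfact_def)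
next
  case (Suc n)
  let ?G = "\<lambda>i. gfact (t - g) b i"
  have "gfact t a (Suc n) = (\<Sum>i\<le>n. st a b g n i * ?G i * (t - real n * a))"
    by (simp add: gfact_Suc Suc sum_distrib_right)
  also have "\<dots> = (\<Sum>i\<le>n. st a b g n i * ?G (Suc i)) + (\<Sum>i\<le>n. (real i * b - real n * a + g) * st a b g n i * ?G i)"
    by (simp add: sum.distrib[symmetric] gfact_Suc algebra_simps)
  also have "(\<Sum>i\<le>n. st a b g n i * ?G (Suc i)) = (\<Sum>i\<le>Suc n. (if i = 0 then 0 else st a b g n (i - 1)) * ?G i)"
    by (subst sum.atMost_Suc_shift) simp
  also have "(\<Sum>i\<le>n. (real i * b - real n * a + g) * st a b g n i * ?G i) = (\<Sum>i\<le>Suc n. (real i * b - real n * a + g) * st a b g n i * ?G i)"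
    by (simp add: st_zero)
  finally show ?case
    by (simp add: sum.distrib[symmetric] algebra_simps)
qed

lemma gfact_at: "gfact (real j * b) b i = (if i \<le> j then (\<Prod>l<i. (real j - real l) * b) else 0)"
proof (cases "i \<le> j")
  case True then show ?thesis by (simp add: gfact_def algebra_simps)
next
  case False
  have "(\<Prod>l<i. real j * b - real l * b) = 0" using False by (intro prod_zero) (auto intro!: bexI[of _ j])
  then show ?thesis using False unfolding gfact_def by simp
qed

lemma uniq0:
  assumes b: "b \<noteq> 0" and h: "\<forall>t. (\<Sum>i\<le>n. e i * gfact (t - g) b i) = 0"
  shows "j \<le> n \<Longrightarrow> e j = 0"
proof (induction j rule: less_induct)
  case (less j)
  have "0 = (\<Sum>i\<le>n. e i * gfact (real j * b) b i)"
    using h[rule_format, of "g + real j * b"] by simp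
  also have "\<dots> = e j * gfact (real j * b) b j + (\<Sum>i\<in>{..n} - {j}. e i * gfact (real j * b) b i)"
    using less.prems by (subst sum.remove[of _ j]) auto
  also have "(\<Sum>i\<in>{..n} - {j}. e i * gfact (real j * b) b i) = 0"
  proof (rule sum.neutral, rule ballI)
    fix i assume i: "i \<in> {..n} - {j}"
    show "e i * gfact (real j * b) b i = 0"
    proof (cases "i < j")
      case True then show ?thesis using less.IH less.prems by simp
    next
      case False then show ?thesis using i by (simp add: gfact_at)
    qed
  qed
  finally have "e j * gfact (real j * b) b j = 0" by simp
  moreover have "gfact (real j * b) b j \<noteq> 0"
    using b by (simp add: gfact_at)
  ultimately show ?case by simp
qed

lemma gstirling_st:
  assumes b: "b \<noteq> 0"
  shows "gstirling n k a b g = st a b g n k"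
proof -
  have "(THE c :: nat \<Rightarrow> real. (\<forall>t. gfact t a n = (\<Sum>i\<le>n. c i * gfact (t - g) b i))
                           \<and> (\<forall>i>n. c i = 0)) = st a b g n"
  proof (rule the_equality)
    show "(\<forall>t. gfact t a n = (\<Sum>i\<le>n. st a b g n i * gfact (t - g) b i)) \<and> (\<forall>i>n. st a b g n i = 0)"
      using st_ident st_zero by blast
  next
    fix c :: "nat \<Rightarrow> real"
    assume c: "(\<forall>t. gfact t a n = (\<Sum>i\<le>n. c i * gfact (t - g) b i)) \<and> (\<forall>i>n. c i = 0)"
    have h: "\<forall>t. (\<Sum>i\<le>n. (c i - st a b g n i) * gfact (t - g) b i) = 0"
      using c st_ident[of _ a n b g] by (simp add: algebra_simps sum_subtractf)
    show "c = st a b g n"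
    proof
      fix i show "c i = st a b g n i"
      proof (cases "i \<le> n")
        case True then show ?thesis using uniq0[OF b h, of i] by simp
      next
        case False then show ?thesis using c st_zero[of n i] by simp
      qed
    qed
  qed
  then show ?thesis unfolding gstirling_def by simp
qed

abbreviation fc where "fc \<equiv> fps_const"

lemma P_rec:
  "(\<Sum>k\<le>Suc n. fps_const (st a b g (Suc n) k) * Y ^ k) =
   Y * (\<Sum>k\<le>n. fps_const (st a b g n k) * Y ^ k)
   + (\<Sum>k\<le>n. fps_const ((real k * b - real n * a + g) * st a b g n k) * Y ^ k)"
proof -
  have "(\<Sum>k\<le>Suc n. fps_const (st a b g (Suc n) k) * Y ^ k) =
     (\<Sum>k\<le>Suc n. fps_const (if k = 0 then 0 else st a b g n (k - 1)) * Y ^ k)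
     + (\<Sum>k\<le>Suc n. fps_const ((real k * b - real n * a + g) * st a b g n k) * Y ^ k)"
  proof -
    have "\<And>k. fps_const (st a b g (Suc n) k) * Y ^ k = fps_const (if k = 0 then 0 else st a b g n (k - 1)) * Y ^ k
       + fps_const ((real k * b - real n * a + g) * st a b g n k) * Y ^ k"
      by (simp only: st.simps fps_const_add[symmetric] distrib_right)
    then show ?thesis by (simp only: sum.distrib)
  qed
  also have "(\<Sum>k\<le>Suc n. fps_const (if k = 0 then 0 else st a b g n (k - 1)) * Y ^ k)
     = Y * (\<Sum>k\<le>n. fps_const (st a b g n k) * Y ^ k)"
    by (subst sum.atMost_Suc_shift) (simp add: sum_distrib_left algebra_simps)
  also have "(\<Sum>k\<le>Suc n. fps_const ((real k * b - real n * a + g) * st a b g n k) * Y ^ k)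
     = (\<Sum>k\<le>n. fps_const ((real k * b - real n * a + g) * st a b g n k) * Y ^ k)"
    by (simp add: st_zero)
  finally show ?thesis .
qed

definition Rm :: "real \<Rightarrow> real \<Rightarrow> real \<Rightarrow> real \<Rightarrow> nat \<Rightarrow> real fps" where
  "Rm a b r x m = binom_fps a ((r - real m * a) / a)
    * exp_fps (fps_const (x / b) * (binom_fps a (b / a) - 1))
    * (\<Sum>k\<le>m. fps_const (st a b r m k) * (fps_const x * binom_fps a (b / a)) ^ k)"

lemma Rm_deriv:
  assumes a: "a \<noteq> 0" and b: "b \<noteq> 0"
  shows "fps_deriv (Rm a b r x m) = Rm a b r x (Suc m)"
proof -
  define c where "c = (r - real m * a) / a"
  define p where "p = b / a"
  define E where "E = exp_fps (fps_const (x / b) * (binom_fps a p - 1))"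
  define Y where "Y = fps_const x * binom_fps a p"
  define P where "P = (\<Sum>k\<le>m. fps_const (st a b r m k) * Y ^ k)"
  define H where "H = binom_fps a (c - 1) * E"
  have c1: "c - 1 = (r - real (Suc m) * a) / a" using a by (simp add: c_def field_simps)
  have R1: "Rm a b r x (Suc m) = H * (\<Sum>k\<le>Suc m. fps_const (st a b r (Suc m) k) * Y ^ k)"
    by (simp add: Rm_def H_def c1 E_def Y_def p_def)
  have R0: "Rm a b r x m = binom_fps a c * E * P"
    by (simp add: Rm_def c_def E_def Y_def p_def P_def)
  have u0: "(fps_const (x / b) * (binom_fps a p - 1)) $ 0 = 0" by simp
  have DE: "fps_deriv E = E * (fps_const x * binom_fps a (p - 1))"
  proof -
    have du: "fps_deriv (fps_const (x / b) * (binom_fps a p - 1)) = fps_const x * binom_fps a (p - 1)"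
      using a b by (simp add: B_deriv p_def mult.assoc[symmetric] fps_const_mult[symmetric] del: fps_const_mult)
    show ?thesis unfolding E_def exp_fps_def fps_compose_deriv[OF u0] du by simp
  qed
  have DB: "fps_deriv (binom_fps a c) = fps_const (r - real m * a) * binom_fps a (c - 1)"
    using a by (simp add: B_deriv c_def)
  have BB: "binom_fps a c * binom_fps a (p - 1) = binom_fps a (c - 1) * binom_fps a p"
    by (simp add: B_mult algebra_simps)
  have DY: "fps_deriv Y = fps_const (x * b) * binom_fps a (p - 1)"
    using a by (simp add: Y_def B_deriv p_def)
  have key: "binom_fps a c * (fps_const (of_nat k) * fps_deriv Y * Y ^ (k - 1))
      = fps_const (real k * b) * binom_fps a (c - 1) * Y ^ k" for k
  proof (cases k)
    case 0 then show ?thesis by simp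
  next
    case (Suc j)
    have "binom_fps a c * (fps_const (of_nat k) * fps_deriv Y * Y ^ (k - 1))
       = fps_const (real k * b * x) * (binom_fps a c * binom_fps a (p - 1)) * Y ^ j"
      by (simp add: DY Suc mult_ac)
    also have "\<dots> = fps_const (real k * b) * binom_fps a (c - 1) * Y ^ k"
      by (simp add: BB Suc Y_def mult_ac)
    finally show ?thesis .
  qed
  have DP: "binom_fps a c * fps_deriv P = binom_fps a (c - 1) * (\<Sum>k\<le>m. fps_const (real k * b * st a b r m k) * Y ^ k)"
  proof -
    have "binom_fps a c * fps_deriv P = (\<Sum>k\<le>m. fps_const (st a b r m k) * (binom_fps a c * (fps_const (of_nat k) * fps_deriv Y * Y ^ (k - 1))))"
      unfolding P_def by (simp add: fps_deriv_sum fps_deriv_power sum_distrib_left mult_ac)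
    also have "\<dots> = (\<Sum>k\<le>m. binom_fps a (c - 1) * (fps_const (real k * b * st a b r m k) * Y ^ k))"
      by (rule sum.cong) (simp_all only: key, simp add: mult_ac)
    finally show ?thesis by (simp add: sum_distrib_left)
  qed
  have "fps_deriv (Rm a b r x m) = fps_deriv (binom_fps a c) * E * P + binom_fps a c * fps_deriv E * P
      + E * (binom_fps a c * fps_deriv P)"
    by (simp add: R0 fps_deriv_mult algebra_simps)
  also have "\<dots> = H * (fps_const (r - real m * a) * P + Y * P + (\<Sum>k\<le>m. fps_const (real k * b * st a b r m k) * Y ^ k))"
  proof -
    have "binom_fps a c * fps_deriv E * P = E * fps_const x * (binom_fps a c * binom_fps a (p - 1)) * P"
      by (simp add: DE ac_simps)
    also have "\<dots> = H * Y * P" by (simp only: BB H_def Y_def ac_simps)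
    finally have t2: "binom_fps a c * fps_deriv E * P = H * Y * P" .
    show ?thesis unfolding t2 DB DP by (simp add: H_def algebra_simps)
  qed
  also have "\<dots> = Rm a b r x (Suc m)"
    unfolding R1 P_rec P_def
    by (simp add: algebra_simps sum_distrib_left sum.distrib[symmetric] fps_const_mult[symmetric] fps_const_add[symmetric] fps_const_sub[symmetric] del: fps_const_mult fps_const_add fps_const_sub)
  finally show ?thesis .
qed

lemma Rm_0: "Rm a b r x m $ 0 = (\<Sum>k\<le>m. st a b r m k * x ^ k)"
  by (simp add: Rm_def exp_fps_def fps_sum_nth fps_nth_power_0)

lemma Rm_nth:
  assumes a: "a \<noteq> 0" and b: "b \<noteq> 0"
  shows "Rm a b r x m $ n = (\<Sum>k\<le>n + m. st a b r (n + m) k * x ^ k) / fact n"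
proof (induction n arbitrary: m)
  case 0 then show ?case by (simp add: Rm_0)
next
  case (Suc n)
  have "fps_deriv (Rm a b r x m) $ n = Rm a b r x (Suc m) $ n" by (simp add: Rm_deriv[OF a b])
  then have "of_nat (Suc n) * Rm a b r x m $ Suc n = Rm a b r x (Suc m) $ n" by simp
  then have "Rm a b r x m $ Suc n = Rm a b r x (Suc m) $ n / of_nat (Suc n)"
    by (simp add: field_simps del: of_nat_Suc)
  then show ?case using Suc.IH[of "Suc m"] by (simp add: field_simps del: of_nat_Suc)
qed

theorem lemma2:
  fixes \<alpha> \<beta> r x :: real and m :: nat
  assumes "\<alpha> \<noteq> 0" and "\<beta> \<noteq> 0"
  shows "Abs_fps (\<lambda>n. gexppoly (n + m) x \<alpha> \<beta> r / fact n) =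
    binom_fps \<alpha> ((r - real m * \<alpha>) / \<alpha>)
    * exp_fps (fps_const (x / \<beta>) * (binom_fps \<alpha> (\<beta> / \<alpha>) - 1))
    * gexppoly_fps m (fps_const x * binom_fps \<alpha> (\<beta> / \<alpha>)) \<alpha> \<beta> r"
proof -
  have "binom_fps \<alpha> ((r - real m * \<alpha>) / \<alpha>)
    * exp_fps (fps_const (x / \<beta>) * (binom_fps \<alpha> (\<beta> / \<alpha>) - 1))
    * gexppoly_fps m (fps_const x * binom_fps \<alpha> (\<beta> / \<alpha>)) \<alpha> \<beta> r = Rm \<alpha> \<beta> r x m"
    by (simp add: Rm_def gexppoly_fps_def gstirling_st[OF assms(2)])
  moreover have "Rm \<alpha> \<beta> r x m = Abs_fps (\<lambda>n. gexppoly (n + m) x \<alpha> \<beta> r / fact n)"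
    by (rule fps_ext) (simp add: Rm_nth[OF assms] gexppoly_def gstirling_st[OF assms(2)])
  ultimately show ?thesis by simp
qed

end
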